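(* Let $\mathcal{M}\subset\mathbb{R}^d$ be a set of $n$ distinct points with the Euclidean metric, $k$ an integer with $2\le k<n$, and $0<\epsilon<\tfrac12$. Let $\epsilon_1=\frac{\epsilon}{3+2\epsilon}$, let $P_1$ be the output of the farthest-point-insertion procedure on $(\mathcal{M},k)$ (choose $q_1,q_2\in\mathcal{M}$ realizing $\operatorname{diam}(\mathcal{M})$, set $S_2=\{q_1,q_2\}$, and for $i=2,\dots,k-1$ add a point of $\mathcal{M}$ maximizing $\delta(\cdot,S_i)$), and let $\epsilon_2=\frac{\epsilon_1R_{P_1}}{2\sqrt d}$. Consider an axis-parallel grid in $\mathbb{R}^d$ of cubic cells of side length $\epsilon_2$. Then the number of grid cells that intersect $\mathcal{M}$ is $O\!\left(k\lceil 1/\epsilon_1\rceil^d\right)$, where the implied constant depends only on $d$.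
   Context: For a finite nonempty $S\subset\mathcal{M}$, $\delta(x,S)=\min_{s\in S}\|x-s\|$ and $R_S=\max_{x\in\mathcal{M}}\delta(x,S)$. *)

theory Defs
  imports "HOL-Analysis.Analysis"
begin

definition delta :: "'a::real_normed_vector \<Rightarrow> 'a set \<Rightarrow> real" where
  "delta x S = Min ((\<lambda>s. norm (x - s)) ` S)"

definition covrad :: "'a::real_normed_vector set \<Rightarrow> 'a set \<Rightarrow> real" where
  "covrad M S = Max ((\<lambda>x. delta x S) ` M)"

text \<open>P is a possible output of farthest-point insertion on (M,k): q1,q2 realize the
  diameter of M, and for i = 2..k-1 the point q(i+1) maximizes delta(.,S_i), S_i = {q1..qi}.\<close>
definition fpi_output :: "'a::real_normed_vector set \<Rightarrow> nat \<Rightarrow> 'a set \<Rightarrow> bool" where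
  "fpi_output M k P \<longleftrightarrow> (\<exists>q::nat \<Rightarrow> 'a.
      (\<forall>i\<in>{1..k}. q i \<in> M) \<and>
      (\<forall>x\<in>M. \<forall>y\<in>M. norm (x - y) \<le> norm (q 1 - q 2)) \<and>
      (\<forall>i\<in>{2..<k}. \<forall>y\<in>M. delta y (q ` {1..i}) \<le> delta (q (Suc i)) (q ` {1..i})) \<and>
      P = q ` {1..k})"

text \<open>Index of the half-open grid cell (side h, offset o) containing x.\<close>
definition cell_index :: "real^'n \<Rightarrow> real \<Rightarrow> real^'n \<Rightarrow> int^'n" where
  "cell_index c h x = (\<chi> i. \<lfloor>(x $ i - c $ i) / h\<rfloor>)"

end

theory Submission
  imports Defs
begin

lemma card_box_le:
  fixes S :: "'n::finite \<Rightarrow> int set"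
  assumes "\<And>i. finite (S i)"
  shows "card {z::int^'n. \<forall>i. z$i \<in> S i} \<le> (\<Prod>i\<in>UNIV. card (S i))"
    and "finite {z::int^'n. \<forall>i. z$i \<in> S i}"
proof -
  have sub: "{z::int^'n. \<forall>i. z$i \<in> S i} \<subseteq> vec_lambda ` (PiE UNIV S)"
  proof
    fix z :: "int^'n" assume "z \<in> {z::int^'n. \<forall>i. z$i \<in> S i}"
    then have "vec_nth z \<in> PiE UNIV S" by auto
    moreover have "z = vec_lambda (vec_nth z)" by simp
    ultimately show "z \<in> vec_lambda ` (PiE UNIV S)" by blast
  qed
  have fin: "finite (PiE UNIV S)" using assms by (simp add: finite_PiE)
  have "card {z::int^'n. \<forall>i. z$i \<in> S i} \<le> card (vec_lambda ` (PiE UNIV S))"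
    using sub fin by (intro card_mono) auto
  also have "\<dots> \<le> card (PiE UNIV S)" by (rule card_image_le[OF fin])
  also have "\<dots> = (\<Prod>i\<in>UNIV. card (S i))" by (simp add: card_PiE)
  finally show "card {z::int^'n. \<forall>i. z$i \<in> S i} \<le> (\<Prod>i\<in>UNIV. card (S i))" .
  show "finite {z::int^'n. \<forall>i. z$i \<in> S i}" using sub fin finite_subset by blast
qed

theorem lemma6:
  "\<exists>C::real. \<forall>(M::(real^'n) set) (k::nat) (\<epsilon>::real) (P1::(real^'n) set) (c::real^'n).
     finite M \<and> 2 \<le> k \<and> k < card M \<and> 0 < \<epsilon> \<and> \<epsilon> < 1/2 \<and> fpi_output M k P1 \<longrightarrow>
     (let \<epsilon>1 = \<epsilon> / (3 + 2 * \<epsilon>);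
          \<epsilon>2 = \<epsilon>1 * covrad M P1 / (2 * sqrt (real CARD('n)))
      in real (card (cell_index c \<epsilon>2 ` M))
           \<le> C * real k * real_of_int (\<lceil>1 / \<epsilon>1\<rceil>) ^ CARD('n))"
proof (intro exI allI impI)
  define d where "d = real CARD('n)"
  define K where "K = 4 * sqrt d + 2"
  have K1: "K \<ge> 1" unfolding K_def d_def by simp
  fix M :: "(real^'n) set" and k :: nat and \<epsilon> :: real and P1 :: "(real^'n) set" and c :: "real^'n"
  assume H: "finite M \<and> 2 \<le> k \<and> k < card M \<and> 0 < \<epsilon> \<and> \<epsilon> < 1/2 \<and> fpi_output M k P1"
  then have finM: "finite M" and k2: "2 \<le> k" and kM: "k < card M" and ep: "0 < \<epsilon>" "\<epsilon> < 1/2"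
    and fo: "fpi_output M k P1" by auto
  obtain q where qM: "\<forall>i\<in>{1..k}. q i \<in> M" and P1: "P1 = q ` {1..k}"
    using fo unfolding fpi_output_def by blast
  have finP: "finite P1" and neP: "P1 \<noteq> {}" using P1 k2 by auto
  have cardP: "card P1 \<le> k" using P1 card_image_le[of "{1..k}" q] by simp
  have neM: "M \<noteq> {}" using kM by auto
  define R where "R = covrad M P1"
  have near: "\<exists>p\<in>P1. norm (x - p) \<le> R" if x: "x \<in> M" for x
  proof -
    have "delta x P1 \<in> (\<lambda>s. norm (x - s)) ` P1"
      unfolding delta_def using finP neP by (intro Min_in) auto
    then obtain p where p: "p \<in> P1" "delta x P1 = norm (x - p)" by auto
    have "delta x P1 \<le> R" unfolding R_def covrad_def using finM x by (intro Max_ge) auto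
    then show ?thesis using p by auto
  qed
  have R0: "R \<ge> 0"
  proof -
    obtain x where "x \<in> M" using neM by auto
    then obtain p where "norm (x - p) \<le> R" using near by blast
    then show ?thesis by (meson norm_ge_zero order_trans)
  qed
  define e1 where "e1 = \<epsilon> / (3 + 2 * \<epsilon>)"
  have e1: "0 < e1" "e1 < 1" using ep unfolding e1_def by (auto simp: field_simps)
  define N where "N = \<lceil>1 / e1\<rceil>"
  have N1: "real_of_int N \<ge> 1"
  proof -
    have "0 < 1 / e1" using e1 by simp
    then have "0 < N" unfolding N_def by simp
    then show ?thesis by simp
  qed
  have Ne: "1 / e1 \<le> real_of_int N" unfolding N_def by simp
  define h where "h = e1 * R / (2 * sqrt d)"
  have d0: "d > 0" unfolding d_def by simp
  have h0: "h \<ge> 0" unfolding h_def using e1 R0 d0 by simp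
  have goal: "real (card (cell_index c h ` M)) \<le> K ^ CARD('n) * real k * real_of_int N ^ CARD('n)"
  proof (cases "h = 0")
    case True
    have "cell_index c h ` M \<subseteq> {0}" unfolding cell_index_def True
      by (auto simp: vec_eq_iff)
    then have "card (cell_index c h ` M) \<le> card {0::int^'n}"
      by (intro card_mono) auto
    then have "card (cell_index c h ` M) \<le> 1" by simp
    moreover have "1 \<le> K ^ CARD('n) * real k * real_of_int N ^ CARD('n)"
    proof -
      have "1 \<le> K ^ CARD('n)" using K1 by simp
      moreover have "1 \<le> real_of_int N ^ CARD('n)" using N1 by simp
      moreover have "1 \<le> real k" using k2 by simp
      ultimately have "1 * 1 \<le> K ^ CARD('n) * real k"
        by (intro mult_mono) auto
      then have "1 * 1 \<le> (K ^ CARD('n) * real k) * real_of_int N ^ CARD('n)"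
        using \<open>1 \<le> real_of_int N ^ CARD('n)\<close> by (intro mult_mono) auto
      then show ?thesis by simp
    qed
    ultimately show ?thesis by linarith
  next
    case False
    then have hp: "h > 0" using h0 by simp
    then have Rp: "R > 0" using R0 unfolding h_def by (cases "R = 0") auto
    define S where "S p i = {\<lfloor>(p$i - R - c$i)/h\<rfloor> .. \<lfloor>(p$i + R - c$i)/h\<rfloor>}" for p :: "real^'n" and i
    define B where "B p = {z::int^'n. \<forall>i. z$i \<in> S p i}" for p
    have sub: "cell_index c h ` M \<subseteq> (\<Union>p\<in>P1. B p)"
    proof
      fix z assume "z \<in> cell_index c h ` M"
      then obtain x where x: "x \<in> M" "z = cell_index c h x" by auto
      obtain p where p: "p \<in> P1" "norm (x - p) \<le> R" using near x(1) by blast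
      have "z $ i \<in> S p i" for i
      proof -
        have "\<bar>(x - p)$i\<bar> \<le> R" using component_le_norm_cart[of "x - p" i] p(2) by linarith
        then have a: "p$i - R - c$i \<le> x$i - c$i" "x$i - c$i \<le> p$i + R - c$i" by auto
        have "(p$i - R - c$i)/h \<le> (x$i - c$i)/h" "(x$i - c$i)/h \<le> (p$i + R - c$i)/h"
          using a hp by (auto intro: divide_right_mono)
        then show ?thesis unfolding S_def x(2) cell_index_def by (auto intro: floor_mono)
      qed
      then show "z \<in> (\<Union>p\<in>P1. B p)" using p(1) unfolding B_def by blast
    qed
    have cS: "real (card (S p i)) \<le> K * real_of_int N" for p i
    proof -
      define a where "a = (p$i - R - c$i)/h"
      define b where "b = (p$i + R - c$i)/h"
      have ab: "b - a = 2 * R / h" unfolding a_def b_def using hp by (simp add: field_simps)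
      have "2 * R / h = 4 * sqrt d / e1" unfolding h_def using Rp e1 d0 by (simp add: field_simps)
      also have "\<dots> = 4 * sqrt d * (1 / e1)" by simp
      also have "\<dots> \<le> 4 * sqrt d * real_of_int N" using Ne d0
        by (intro mult_left_mono) auto
      finally have bd: "b - a \<le> 4 * sqrt d * real_of_int N" using ab by simp
      have "real (card (S p i)) = real (nat (\<lfloor>b\<rfloor> - \<lfloor>a\<rfloor> + 1))" unfolding S_def a_def b_def by simp
      also have "\<dots> \<le> b - a + 2"
      proof -
        have "0 \<le> 2 * R / h" using Rp hp by simp
        then have "a \<le> b" using ab by linarith
        then have fl: "\<lfloor>a\<rfloor> \<le> \<lfloor>b\<rfloor>" by (rule floor_mono)
        then have "real (nat (\<lfloor>b\<rfloor> - \<lfloor>a\<rfloor> + 1)) = real_of_int (\<lfloor>b\<rfloor> - \<lfloor>a\<rfloor> + 1)"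
          by simp
        also have "\<dots> \<le> b - a + 2"
          using of_int_floor_le[of b] real_of_int_floor_gt_diff_one[of a] by linarith
        finally show ?thesis .
      qed
      also have "\<dots> \<le> K * real_of_int N" using bd N1 unfolding K_def by (simp add: algebra_simps)
      finally show ?thesis .
    qed
    have cB: "real (card (B p)) \<le> (K * real_of_int N) ^ CARD('n)" for p
    proof -
      have fS: "\<And>i. finite (S p i)" unfolding S_def by simp
      have "real (card (B p)) \<le> real (\<Prod>i\<in>UNIV. card (S p i))"
        unfolding B_def by (intro of_nat_mono card_box_le(1)) (rule fS)
      also have "\<dots> = (\<Prod>i\<in>UNIV. real (card (S p i)))" by simp
      also have "\<dots> \<le> (\<Prod>i\<in>(UNIV::'n set). K * real_of_int N)"
        by (intro prod_mono) (use cS in auto)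
      also have "\<dots> = (K * real_of_int N) ^ CARD('n)" by simp
      finally show ?thesis .
    qed
    have fB: "finite (B p)" for p
      unfolding B_def by (rule card_box_le(2)) (simp add: S_def)
    have "real (card (cell_index c h ` M)) \<le> real (card (\<Union>p\<in>P1. B p))"
      using sub finP fB by (intro of_nat_mono card_mono) auto
    also have "\<dots> \<le> real (\<Sum>p\<in>P1. card (B p))" by (intro of_nat_mono card_UN_le[OF finP])
    also have "\<dots> = (\<Sum>p\<in>P1. real (card (B p)))" by simp
    also have "\<dots> \<le> (\<Sum>p\<in>P1. (K * real_of_int N) ^ CARD('n))" by (intro sum_mono cB)
    also have "\<dots> = real (card P1) * (K * real_of_int N) ^ CARD('n)" by simp
    also have "\<dots> \<le> real k * (K * real_of_int N) ^ CARD('n)"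
      using cardP K1 N1 by (intro mult_right_mono) auto
    also have "\<dots> = K ^ CARD('n) * real k * real_of_int N ^ CARD('n)"
      by (simp add: power_mult_distrib)
    finally show ?thesis .
  qed
  show "let \<epsilon>1 = \<epsilon> / (3 + 2 * \<epsilon>);
          \<epsilon>2 = \<epsilon>1 * covrad M P1 / (2 * sqrt (real CARD('n)))
      in real (card (cell_index c \<epsilon>2 ` M))
           \<le> K ^ CARD('n) * real k * real_of_int (\<lceil>1 / \<epsilon>1\<rceil>) ^ CARD('n)"
    using goal unfolding Let_def h_def e1_def R_def d_def N_def .
qed

end
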